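(* Let $d\in\mathbb{N}_+$ and consider percolating homogeneous long-range percolation on $\mathbb{Z}^d$ with non-increasing connection function $\lambda(r)=r^{-d}L(r)$, where $L$ is positive, slowly varying and satisfies $\int_1^\infty L(r)r^{-1}\,dr<\infty$. Then there exists a positive finite constant $a_2$ such that $\limsup_{k\to\infty}(\mathbb{E}|\mathcal{B}_k|)^{1/k}<a_2$ and $$\lim_{k\to\infty}\mathbb{P}(|\mathcal{B}_k|^{1/k}<a_2)=1.$$
   Context: Long-range percolation on $\mathbb{Z}^d$: for each unordered pair of distinct vertices $x,y$, an edge is present independently with probability $1-e^{-\lambda(\|x-y\|)}$, where $\|x\|=\max_i|x_i|$. A function $L$ is slowly varying if $L(cr)/L(r)\to1$ as $r\to\infty$ for all $c>0$. $D(x,y)$ is the graph distance in the resulting random graph and $\mathcal{B}_k=\{y\in\mathbb{Z}^d: D(0,y)\le k\}$. Percolating means the origin lies in an infinite cluster with positive probability. *)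

theory Defs
  imports "HOL-Probability.Probability"
begin

text \<open>Vertices of Z^d are functions from a finite index type 'd (with d = CARD('d) \<ge> 1)
  to int.  Edges are unordered pairs {x,y} with x \<noteq> y.\<close>

definition supnorm :: "('d::finite \<Rightarrow> int) \<Rightarrow> int" where
  "supnorm x = Max (range (\<lambda>i. \<bar>x i\<bar>))"

definition lrp_edges :: "('d::finite \<Rightarrow> int) set set" where
  "lrp_edges = {e. \<exists>x y. x \<noteq> y \<and> e = {x, y}}"

definition edge_len :: "('d::finite \<Rightarrow> int) set \<Rightarrow> int" where
  "edge_len e = (THE n. \<exists>x y. x \<noteq> y \<and> e = {x, y} \<and> n = supnorm (\<lambda>i. x i - y i))"

definition edge_prob :: "(real \<Rightarrow> real) \<Rightarrow> ('d::finite \<Rightarrow> int) set \<Rightarrow> real" where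
  "edge_prob lam e = 1 - exp (- lam (real_of_int (edge_len e)))"

definition lrp :: "(real \<Rightarrow> real) \<Rightarrow> (('d::finite \<Rightarrow> int) set \<Rightarrow> bool) measure" where
  "lrp lam = PiM lrp_edges (\<lambda>e. measure_pmf (bernoulli_pmf (edge_prob lam e)))"

definition adj :: "(('d::finite \<Rightarrow> int) set \<Rightarrow> bool) \<Rightarrow> ('d \<Rightarrow> int) \<Rightarrow> ('d \<Rightarrow> int) \<Rightarrow> bool" where
  "adj \<omega> x y \<longleftrightarrow> x \<noteq> y \<and> \<omega> {x, y}"

definition ball :: "nat \<Rightarrow> (('d::finite \<Rightarrow> int) set \<Rightarrow> bool) \<Rightarrow> ('d \<Rightarrow> int) set" where
  "ball k \<omega> = {y. \<exists>j\<le>k. (adj \<omega> ^^ j) (\<lambda>_. 0) y}"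

definition cluster :: "(('d::finite \<Rightarrow> int) set \<Rightarrow> bool) \<Rightarrow> ('d \<Rightarrow> int) set" where
  "cluster \<omega> = {y. (adj \<omega>)\<^sup>*\<^sup>* (\<lambda>_. 0) y}"

definition ball_size :: "nat \<Rightarrow> (('d::finite \<Rightarrow> int) set \<Rightarrow> bool) \<Rightarrow> ennreal" where
  "ball_size k \<omega> = (if finite (ball k \<omega>) then of_nat (card (ball k \<omega>)) else \<infinity>)"

definition eroot :: "nat \<Rightarrow> ennreal \<Rightarrow> ereal" where
  "eroot k x = (if x = \<infinity> then \<infinity> else ereal (enn2real x powr (1 / real k)))"

definition slowly_varying :: "(real \<Rightarrow> real) \<Rightarrow> bool" where
  "slowly_varying L \<longleftrightarrow> (\<forall>c>0. ((\<lambda>r. L (c * r) / L r) \<longlongrightarrow> 1) at_top)"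

end

theory Submission
  imports Defs
begin


fun eset :: "('d \<Rightarrow> int) list \<Rightarrow> ('d \<Rightarrow> int) set set" where
  "eset (a # b # vs) = insert {a, b} (eset (b # vs))"
| "eset _ = {}"

lemma finite_eset[simp]: "finite (eset vs)"
  by (induction vs rule: eset.induct) auto

lemma eset_sub: "e \<in> eset vs \<Longrightarrow> e \<subseteq> set vs"
  by (induction vs rule: eset.induct) auto

lemma eset_edges: "e \<in> eset vs \<Longrightarrow> distinct vs \<Longrightarrow> e \<in> lrp_edges"
  by (induction vs rule: eset.induct) (auto simp: lrp_edges_def)

lemma adj_sym: "adj \<omega> x y = adj \<omega> y x"
  by (auto simp: adj_def insert_commute)

lemma succ_eset: "distinct vs \<Longrightarrow> successively (adj \<omega>) vs \<longleftrightarrow> (\<forall>e\<in>eset vs. \<omega> e)"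
  by (induction vs rule: eset.induct) (auto simp: adj_def)

lemma path_exists:
  "(adj \<omega> ^^ j) (\<lambda>_. 0) y \<Longrightarrow> \<exists>vs. vs \<noteq> [] \<and> hd vs = y \<and> last vs = (\<lambda>_. 0) \<and> distinct vs
      \<and> successively (adj \<omega>) vs \<and> length vs \<le> Suc j"
proof (induction j arbitrary: y)
  case 0
  then show ?case by (intro exI[of _ "[y]"]) auto
next
  case (Suc j)
  then obtain z where z: "(adj \<omega> ^^ j) (\<lambda>_. 0) z" "adj \<omega> z y" by auto
  from Suc.IH[OF z(1)] obtain us where us: "us \<noteq> []" "hd us = z" "last us = (\<lambda>_. 0)" "distinct us"
    "successively (adj \<omega>) us" "length us \<le> Suc j" by blast
  show ?case
  proof (cases "y \<in> set us")
    case True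
    define P where "P = (\<lambda>x. x \<noteq> y)"
    have split: "us = takeWhile P us @ dropWhile P us" by simp
    have ne: "dropWhile P us \<noteq> []" using True by (simp add: P_def dropWhile_eq_Nil_conv)
    have hd: "hd (dropWhile P us) = y" using hd_dropWhile[OF ne] by (simp add: P_def)
    have "last (dropWhile P us) = last us" using ne split by (metis last_appendR)
    moreover have "distinct (dropWhile P us)" using us(4) split by (metis distinct_append)
    moreover have "successively (adj \<omega>) (dropWhile P us)" using us(5) split
      by (metis successively_append_iff)
    moreover have "length (dropWhile P us) \<le> Suc (Suc j)" using us(6) length_dropWhile_le[of P us] by simp
    ultimately show ?thesis using ne hd us(3) by (intro exI[of _ "dropWhile P us"]) simp
  next
    case False
    have "successively (adj \<omega>) (y # us)" using us z(2) adj_sym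
      by (cases us) auto
    then show ?thesis using False us by (intro exI[of _ "y # us"]) auto
  qed
qed

lemma path_relpow:
  "vs \<noteq> [] \<Longrightarrow> last vs = (\<lambda>_. 0) \<Longrightarrow> successively (adj \<omega>) vs \<Longrightarrow> (adj \<omega> ^^ (length vs - 1)) (\<lambda>_. 0) (hd vs)"
proof (induction vs)
  case Nil then show ?case by simp
next
  case (Cons a us)
  show ?case
  proof (cases us)
    case Nil then show ?thesis using Cons by simp
  next
    case (Cons b ws)
    have "(adj \<omega> ^^ (length us - 1)) (\<lambda>_. 0) (hd us)" using Cons.IH Cons.prems \<open>us = b # ws\<close> by auto
    moreover have "adj \<omega> (hd us) a" using Cons.prems \<open>us = b # ws\<close> adj_sym by auto
    ultimately show ?thesis using \<open>us = b # ws\<close> by auto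
  qed
qed

definition PK :: "nat \<Rightarrow> ('d \<Rightarrow> int) list set" where
  "PK k = {vs. vs \<noteq> [] \<and> length vs \<le> Suc k \<and> last vs = (\<lambda>_. 0) \<and> distinct vs}"

lemma ball_iff: "y \<in> ball k \<omega> \<longleftrightarrow> (\<exists>vs\<in>PK k. hd vs = y \<and> successively (adj \<omega>) vs)"
proof
  assume "y \<in> ball k \<omega>"
  then obtain j where "j \<le> k" "(adj \<omega> ^^ j) (\<lambda>_. 0) y" by (auto simp: ball_def)
  then obtain vs where vs: "vs \<noteq> []" "hd vs = y" "last vs = (\<lambda>_. 0)" "distinct vs"
      "successively (adj \<omega>) vs" "length vs \<le> Suc j" using path_exists[of j \<omega> y] by blast
  have "vs \<in> PK k" unfolding PK_def using vs \<open>j \<le> k\<close> by simp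
  then show "\<exists>vs\<in>PK k. hd vs = y \<and> successively (adj \<omega>) vs" using vs by blast
next
  assume "\<exists>vs\<in>PK k. hd vs = y \<and> successively (adj \<omega>) vs"
  then obtain vs where "vs \<in> PK k" "hd vs = y" "successively (adj \<omega>) vs" by blast
  then have "vs \<noteq> []" "last vs = (\<lambda>_. 0)" "length vs - 1 \<le> k" unfolding PK_def by auto
  then have "(adj \<omega> ^^ (length vs - 1)) (\<lambda>_. 0) y" using path_relpow[of vs \<omega>] \<open>hd vs = y\<close>
     \<open>successively (adj \<omega>) vs\<close> by simp
  then show "y \<in> ball k \<omega>" unfolding ball_def using \<open>length vs - 1 \<le> k\<close> by blast
qed



abbreviation Mc :: "(real \<Rightarrow> real) \<Rightarrow> ('d::finite \<Rightarrow> int) set \<Rightarrow> bool measure" where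
  "Mc lam e \<equiv> measure_pmf (bernoulli_pmf (edge_prob lam e))"

lemma prob_lrp: "prob_space (lrp lam)"
  unfolding lrp_def by (rule prob_space_PiM) (rule prob_space_measure_pmf)

lemma space_lrp: "space (lrp lam) = (\<Pi>\<^sub>E e\<in>lrp_edges. UNIV)"
  unfolding lrp_def by (simp add: space_PiM)

definition Ev :: "(real \<Rightarrow> real) \<Rightarrow> ('d::finite \<Rightarrow> int) list \<Rightarrow> (('d \<Rightarrow> int) set \<Rightarrow> bool) set" where
  "Ev lam vs = prod_emb lrp_edges (Mc lam) (eset vs) (\<Pi>\<^sub>E e\<in>eset vs. {True})"

lemma eset_sub_edges: "distinct vs \<Longrightarrow> eset vs \<subseteq> lrp_edges"
  using eset_edges by blast

lemma Ev_sets: "distinct vs \<Longrightarrow> Ev lam vs \<in> sets (lrp lam)"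
  unfolding Ev_def lrp_def by (rule sets_PiM_I) (auto simp: eset_sub_edges)

lemma Ev_sub: "Ev lam vs \<subseteq> space (lrp lam)"
  unfolding Ev_def lrp_def prod_emb_def space_PiM by auto

lemma Ev_mem: "\<omega> \<in> space (lrp lam) \<Longrightarrow> distinct vs \<Longrightarrow> \<omega> \<in> Ev lam vs \<longleftrightarrow> successively (adj \<omega>) vs"
  unfolding Ev_def succ_eset prod_emb_def lrp_def space_PiM by (auto simp: PiE_iff) (metis restrict_apply')

lemma Ev_prob:
  fixes vs :: "('d::finite \<Rightarrow> int) list"
  assumes "distinct vs" "\<And>e::('d \<Rightarrow> int) set. e \<in> lrp_edges \<Longrightarrow> 0 \<le> edge_prob lam e \<and> edge_prob lam e \<le> 1"
  shows "emeasure (lrp lam) (Ev lam vs) = (\<Prod>e\<in>eset vs. ennreal (edge_prob lam e))"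
proof -
  have "emeasure (lrp lam) (Ev lam vs) = (\<Prod>e\<in>eset vs. emeasure (Mc lam e) {True})"
    unfolding Ev_def lrp_def
    by (rule emeasure_PiM_emb) (auto simp: eset_sub_edges[OF assms(1)] prob_space_measure_pmf)
  also have "\<dots> = (\<Prod>e\<in>eset vs. ennreal (edge_prob lam e))"
  proof (intro prod.cong refl)
    fix e assume "e \<in> eset vs"
    then have "e \<in> lrp_edges" using eset_sub_edges[OF assms(1)] by blast
    then show "emeasure (Mc lam e) {True} = ennreal (edge_prob lam e)"
      using assms(2)[of e] by (simp add: emeasure_pmf_single)
  qed
  finally show ?thesis .
qed

lemma ball_event:
  fixes y :: "'d::finite \<Rightarrow> int"
  shows "{\<omega> \<in> space (lrp lam). y \<in> ball k \<omega>} = (\<Union>vs\<in>{vs\<in>PK k. hd vs = y}. Ev lam vs)"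
proof -
  have "\<And>\<omega>. \<omega> \<in> space (lrp lam) \<Longrightarrow> y \<in> ball k \<omega> \<longleftrightarrow> (\<exists>vs\<in>{vs\<in>PK k. hd vs = y}. \<omega> \<in> Ev lam vs)"
  proof -
    fix \<omega> :: "('d \<Rightarrow> int) set \<Rightarrow> bool" assume w: "\<omega> \<in> space (lrp lam)"
    have "y \<in> ball k \<omega> \<longleftrightarrow> (\<exists>vs\<in>PK k. hd vs = y \<and> successively (adj \<omega>) vs)" by (rule ball_iff)
    also have "\<dots> \<longleftrightarrow> (\<exists>vs\<in>{vs\<in>PK k. hd vs = y}. \<omega> \<in> Ev lam vs)"
    proof (intro iffI)
      assume "\<exists>vs\<in>PK k. hd vs = y \<and> successively (adj \<omega>) vs"
      then obtain vs where "vs \<in> PK k" "hd vs = y" "successively (adj \<omega>) vs" by blast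
      moreover then have "\<omega> \<in> Ev lam vs" using Ev_mem[OF w] by (simp add: PK_def)
      ultimately show "\<exists>vs\<in>{vs\<in>PK k. hd vs = y}. \<omega> \<in> Ev lam vs" by blast
    next
      assume "\<exists>vs\<in>{vs\<in>PK k. hd vs = y}. \<omega> \<in> Ev lam vs"
      then obtain vs where "vs \<in> PK k" "hd vs = y" "\<omega> \<in> Ev lam vs" by blast
      moreover then have "successively (adj \<omega>) vs" using Ev_mem[OF w] by (simp add: PK_def)
      ultimately show "\<exists>vs\<in>PK k. hd vs = y \<and> successively (adj \<omega>) vs" by blast
    qed
    finally show "y \<in> ball k \<omega> \<longleftrightarrow> (\<exists>vs\<in>{vs\<in>PK k. hd vs = y}. \<omega> \<in> Ev lam vs)" .
  qed
  then show ?thesis using Ev_sub by blast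
qed

lemma ball_event_sets: "{\<omega> \<in> space (lrp lam). y \<in> ball k \<omega>} \<in> sets (lrp lam)"
  unfolding ball_event by (rule sets.countable_UN') (auto simp: Ev_sets PK_def)

lemma meas_count:
  fixes f :: "'a \<Rightarrow> 'b::countable \<Rightarrow> ennreal"
  assumes "\<And>y. (\<lambda>x. f x y) \<in> borel_measurable M" "infinite (UNIV::'b set)"
  shows "(\<lambda>x. \<integral>\<^sup>+y. f x y \<partial>count_space UNIV) \<in> borel_measurable M"
proof -
  note * = bij_betw_from_nat_into[OF countableI_type assms(2)]
  have eq: "(\<lambda>x. \<integral>\<^sup>+y. f x y \<partial>count_space UNIV) = (\<lambda>x. \<Sum>n. f x (from_nat_into UNIV n))"
    by (simp add: nn_integral_bij_count_space[symmetric, OF *] nn_integral_count_space_nat)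
  have "(\<lambda>x. \<Sum>n. f x (from_nat_into UNIV n)) \<in> borel_measurable M"
    by (rule borel_measurable_suminf_order) (rule assms(1))
  then show ?thesis unfolding eq .
qed

lemma ball_size_eq: "ball_size k \<omega> = (\<integral>\<^sup>+ y. indicator (ball k \<omega>) y \<partial>count_space UNIV)"
proof -
  have "(\<integral>\<^sup>+ y. indicator (ball k \<omega>) y \<partial>count_space UNIV) = emeasure (count_space UNIV) (ball k \<omega>)"
    by (rule nn_integral_indicator) simp
  also have "\<dots> = (if finite (ball k \<omega>) then of_nat (card (ball k \<omega>)) else \<infinity>)"
    by (rule emeasure_count_space) simp
  finally show ?thesis unfolding ball_size_def by simp
qed

lemma infinite_vtx: "infinite (UNIV :: ('d::finite \<Rightarrow> int) set)"
proof
  assume "finite (UNIV :: ('d \<Rightarrow> int) set)"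
  then have fin: "finite (range (\<lambda>n::int. (\<lambda>_::'d. n)))" by (rule finite_subset[rotated]) simp
  have inj: "inj (\<lambda>n::int. (\<lambda>_::'d. n))" by (simp add: inj_def fun_eq_iff)
  have "finite (UNIV::int set)" by (rule finite_imageD[OF fin inj])
  then show False by simp
qed

lemma ball_ind_meas:
  fixes y :: "'d::finite \<Rightarrow> int"
  shows "(\<lambda>\<omega>. indicator (ball k \<omega>) y :: ennreal) \<in> borel_measurable (lrp lam)"
proof -
  have m: "(\<lambda>\<omega>. indicator {\<omega> \<in> space (lrp lam). y \<in> ball k \<omega>} \<omega> :: ennreal) \<in> borel_measurable (lrp lam)"
    using ball_event_sets by (rule borel_measurable_indicator)
  have e: "\<And>\<omega>. \<omega> \<in> space (lrp lam) \<Longrightarrow> indicator {\<omega> \<in> space (lrp lam). y \<in> ball k \<omega>} \<omega> = (indicator (ball k \<omega>) y :: ennreal)"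
    by (simp add: indicator_def)
  have "(\<lambda>\<omega>. indicator (ball k \<omega>) y :: ennreal) \<in> borel_measurable (lrp lam) \<longleftrightarrow>
        (\<lambda>\<omega>. indicator {\<omega> \<in> space (lrp lam). y \<in> ball k \<omega>} \<omega> :: ennreal) \<in> borel_measurable (lrp lam)"
    by (rule measurable_cong) (simp add: e)
  then show ?thesis using m by blast
qed

lemma ball_size_meas: "ball_size k \<in> borel_measurable (lrp lam)"
proof -
  have "(\<lambda>\<omega>. \<integral>\<^sup>+ y. indicator (ball k \<omega>) y \<partial>count_space UNIV) \<in> borel_measurable (lrp lam)"
    by (rule meas_count) (rule ball_ind_meas, rule infinite_vtx)
  then show ?thesis unfolding ball_size_eq[abs_def] .
qed

lemma ball_size_le:
  assumes "\<omega> \<in> space (lrp lam)"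
  shows "ball_size k \<omega> \<le> (\<integral>\<^sup>+ vs. indicator (Ev lam vs) \<omega> \<partial>count_space (PK k))"
proof -
  define S where "S = {vs \<in> PK k. \<omega> \<in> Ev lam vs}"
  have "(\<integral>\<^sup>+ vs. indicator (Ev lam vs) \<omega> \<partial>count_space (PK k)) = (\<integral>\<^sup>+ vs. indicator S vs \<partial>count_space (PK k))"
    by (intro nn_integral_cong) (auto simp: S_def indicator_def)
  also have "\<dots> = emeasure (count_space (PK k)) S" by (simp add: S_def)
  also have "\<dots> = (if finite S then of_nat (card S) else \<infinity>)" by (rule emeasure_count_space) (auto simp: S_def)
  finally have eq: "(\<integral>\<^sup>+ vs. indicator (Ev lam vs) \<omega> \<partial>count_space (PK k)) = (if finite S then of_nat (card S) else \<infinity>)" .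
  have sub: "ball k \<omega> \<subseteq> hd ` S"
  proof
    fix y assume "y \<in> ball k \<omega>"
    then obtain vs where "vs \<in> PK k" "hd vs = y" "successively (adj \<omega>) vs" by (auto simp: ball_iff)
    moreover then have "\<omega> \<in> Ev lam vs" using Ev_mem[OF assms] by (simp add: PK_def)
    ultimately have "vs \<in> S" by (simp add: S_def)
    then show "y \<in> hd ` S" using \<open>hd vs = y\<close> by blast
  qed
  show ?thesis
  proof (cases "finite S")
    case True
    then have "finite (ball k \<omega>)" using finite_subset[OF sub finite_imageI[OF True]] by simp
    moreover have "card (ball k \<omega>) \<le> card S" using card_mono[OF finite_imageI[OF True] sub] card_image_le[OF True, of hd] by linarith
    ultimately show ?thesis using eq True by (simp add: ball_size_def)
  qed (simp add: eq)
qed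

lemma exp_bound:
  fixes lam :: "real \<Rightarrow> real" and k :: nat
  defines "P \<equiv> (PK k :: ('d::finite \<Rightarrow> int) list set)"
    and "Q \<equiv> (lrp lam :: (('d \<Rightarrow> int) set \<Rightarrow> bool) measure)"
  shows "(\<integral>\<^sup>+\<omega>. ball_size k \<omega> \<partial>Q) \<le> (\<integral>\<^sup>+ vs. emeasure (Q) (Ev lam vs) \<partial>count_space P)"
proof -
  have "(\<integral>\<^sup>+\<omega>. ball_size k \<omega> \<partial>Q) \<le> (\<integral>\<^sup>+\<omega>. \<integral>\<^sup>+ vs. indicator (Ev lam vs) \<omega> \<partial>count_space P \<partial>Q)"
  proof (rule nn_integral_mono)
    fix \<omega> assume "\<omega> \<in> space (Q)"
    then show "ball_size k \<omega> \<le> (\<integral>\<^sup>+ vs. indicator (Ev lam vs) \<omega> \<partial>count_space P)"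
      unfolding P_def Q_def by (rule ball_size_le)
  qed
  also have "\<dots> = (\<integral>\<^sup>+ vs. \<integral>\<^sup>+\<omega>. indicator (Ev lam vs) \<omega> \<partial>Q \<partial>count_space P)"
  proof (rule nn_integral_count_space_nn_integral)
    show "countable P" by (rule countableI_type)
    fix vs assume "vs \<in> P"
    then have "distinct vs" by (simp add: P_def PK_def)
    then show "indicator (Ev lam vs) \<in> borel_measurable Q"
      unfolding Q_def by (intro borel_measurable_indicator Ev_sets)
  qed
  also have "\<dots> = (\<integral>\<^sup>+ vs. emeasure (Q) (Ev lam vs) \<partial>count_space P)"
  proof (intro nn_integral_cong)
    fix vs assume "vs \<in> space (count_space P)"
    then have "distinct vs" by (simp add: P_def PK_def)
    then show "(\<integral>\<^sup>+\<omega>. indicator (Ev lam vs) \<omega> \<partial>Q) = emeasure Q (Ev lam vs)"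
      unfolding Q_def by (intro nn_integral_indicator Ev_sets)
  qed
  finally show ?thesis .
qed



definition paths :: "nat \<Rightarrow> ('d::finite \<Rightarrow> int) list set" where
  "paths j = {vs. length vs = Suc j \<and> last vs = (\<lambda>_. 0) \<and> distinct vs}"

definition wt :: "(real \<Rightarrow> real) \<Rightarrow> ('d::finite \<Rightarrow> int) list \<Rightarrow> ennreal" where
  "wt lam vs = (\<Prod>e\<in>eset vs. ennreal (edge_prob lam e))"

definition qf :: "(real \<Rightarrow> real) \<Rightarrow> ('d::finite \<Rightarrow> int) \<Rightarrow> ennreal" where
  "qf lam z = (if z = (\<lambda>_. 0) then 0 else ennreal (1 - exp (- lam (real_of_int (supnorm z)))))"

definition Mq :: "(real \<Rightarrow> real) \<Rightarrow> 'd::finite itself \<Rightarrow> ennreal" where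
  "Mq lam _ = (\<integral>\<^sup>+ z. qf lam (z :: 'd \<Rightarrow> int) \<partial>count_space UNIV)"

lemma supnorm_sym: "supnorm (\<lambda>i. x i - y i) = supnorm (\<lambda>i. y i - x i)"
  unfolding supnorm_def by (simp add: abs_minus_commute)

lemma supnorm_ge: "\<bar>z i\<bar> \<le> supnorm z"
  unfolding supnorm_def by (rule Max_ge) auto

lemma supnorm_nonneg: "0 \<le> supnorm z"
  using supnorm_ge[of z undefined] by linarith

lemma supnorm_pos: "z \<noteq> (\<lambda>_. 0) \<Longrightarrow> 0 < supnorm z"
proof -
  assume "z \<noteq> (\<lambda>_. 0)"
  then obtain i where "z i \<noteq> 0" by auto
  then show ?thesis using supnorm_ge[of z i] by linarith
qed

lemma edge_len_pair:
  fixes x y :: "'d::finite \<Rightarrow> int"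
  assumes "x \<noteq> y"
  shows "edge_len {x, y} = supnorm (\<lambda>i. x i - y i)"
  unfolding edge_len_def
proof (rule the_equality)
  show "\<exists>x' y'. x' \<noteq> y' \<and> {x, y} = {x', y'} \<and> supnorm (\<lambda>i. x i - y i) = supnorm (\<lambda>i. x' i - y' i)"
    using assms by blast
next
  fix n assume "\<exists>x' y'. x' \<noteq> y' \<and> {x, y} = {x', y'} \<and> n = supnorm (\<lambda>i. x' i - y' i)"
  then obtain x' y' where "{x, y} = {x', y'}" "n = supnorm (\<lambda>i. x' i - y' i)" by blast
  then show "n = supnorm (\<lambda>i. x i - y i)" using supnorm_sym by (metis doubleton_eq_iff)
qed

lemma diff_nz: "x \<noteq> y \<Longrightarrow> (\<lambda>i. x i - y i) \<noteq> (\<lambda>_. 0::int)"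
  by (auto simp: fun_eq_iff)

lemma edge_prob_q:
  fixes x y :: "'d::finite \<Rightarrow> int"
  assumes "x \<noteq> y"
  shows "ennreal (edge_prob lam {x, y}) = qf lam (\<lambda>i. x i - y i)"
  using assms diff_nz[OF assms] by (simp add: edge_prob_def qf_def edge_len_pair)

lemma edge_prob_bounds:
  assumes H: "\<forall>r>0. 0 \<le> lam r" and e: "e \<in> lrp_edges"
  shows "0 \<le> edge_prob lam e \<and> edge_prob lam e \<le> 1"
proof -
  obtain x y where xy: "x \<noteq> y" "e = {x, y}" using e by (auto simp: lrp_edges_def)
  have "0 < supnorm (\<lambda>i. x i - y i)" by (rule supnorm_pos[OF diff_nz[OF xy(1)]])
  then have "0 < real_of_int (edge_len e)" using xy edge_len_pair[OF xy(1)] by simp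
  then have "0 \<le> lam (real_of_int (edge_len e))" using H by simp
  then show ?thesis unfolding edge_prob_def by simp
qed

lemma eset_notin: "v \<notin> set us \<Longrightarrow> {v, u} \<notin> eset us"
  using eset_sub by blast

lemma wt_cons:
  assumes "distinct (v # u # us)"
  shows "wt lam (v # u # us) = ennreal (edge_prob lam {v, u}) * wt lam (u # us)"
proof -
  have "{v, u} \<notin> eset (u # us)" using assms eset_notin[of v "u # us" u] by simp
  then show ?thesis unfolding wt_def by simp
qed

lemma le_count: "f a \<le> (\<integral>\<^sup>+x. f x \<partial>count_space UNIV)"
proof -
  have "(\<integral>\<^sup>+x. f x * indicator {a} x \<partial>count_space UNIV) = f a"
    by (simp add: emeasure_count_space)
  moreover have "(\<integral>\<^sup>+x. f x * indicator {a} x \<partial>count_space UNIV) \<le> (\<integral>\<^sup>+x. f x \<partial>count_space UNIV)"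
    by (intro nn_integral_mono) (simp split: split_indicator)
  ultimately show ?thesis by simp
qed

lemma Mq_trans:
  fixes u :: "'d::finite \<Rightarrow> int"
  shows "(\<integral>\<^sup>+ v. qf lam (\<lambda>i. v i - u i) \<partial>count_space UNIV) = Mq lam TYPE('d)"
proof -
  have "bij_betw (\<lambda>v::'d \<Rightarrow> int. (\<lambda>i. v i - u i)) UNIV UNIV"
    by (rule bij_betwI[where g="\<lambda>z i. z i + u i"]) auto
  then show ?thesis unfolding Mq_def by (rule nn_integral_bij_count_space)
qed

definition Jn :: "(real \<Rightarrow> real) \<Rightarrow> 'd::finite itself \<Rightarrow> nat \<Rightarrow> ennreal" where
  "Jn lam _ j = (\<integral>\<^sup>+ vs. wt lam vs * indicator (paths j :: ('d \<Rightarrow> int) list set) vs \<partial>count_space UNIV)"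

lemma paths0: "paths 0 = {[\<lambda>_. 0]}"
  unfolding paths_def by (auto simp: length_Suc_conv)

lemma Jn0: "Jn lam TYPE('d::finite) 0 = 1"
  unfolding Jn_def paths0 by (simp add: emeasure_count_space wt_def)

lemma paths_Suc:
  assumes "vs \<in> paths (Suc j)"
  shows "\<exists>v u us. vs = v # u # us \<and> u # us \<in> paths j \<and> v \<notin> set (u # us)"
proof -
  from assms have "length vs = Suc (Suc j)" "last vs = (\<lambda>_. 0)" "distinct vs" by (auto simp: paths_def)
  then obtain v u us where "vs = v # u # us" by (metis length_Suc_conv)
  then show ?thesis using assms by (auto simp: paths_def)
qed

lemma Jn_Suc: "Jn lam TYPE('d::finite) (Suc j) \<le> Mq lam TYPE('d) * Jn lam TYPE('d) j"
proof -
  define G :: "('d \<Rightarrow> int) \<Rightarrow> ('d \<Rightarrow> int) list \<Rightarrow> ennreal" where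
    "G v us = qf lam (\<lambda>i. v i - hd us i) * (wt lam us * indicator (paths j) us)" for v us
  have pw: "wt lam vs * indicator (paths (Suc j)) vs \<le>
     (\<integral>\<^sup>+ us. \<integral>\<^sup>+ v. G v us * indicator {v # us} vs \<partial>count_space UNIV \<partial>count_space UNIV)"
    for vs :: "('d \<Rightarrow> int) list"
  proof (cases "vs \<in> paths (Suc j)")
    case False then show ?thesis by simp
  next
    case True
    then obtain v u us where vs: "vs = v # u # us" "u # us \<in> paths j" "v \<notin> set (u # us)"
      using paths_Suc by blast
    have d: "distinct (v # u # us)" using vs by (simp add: paths_def)
    have "wt lam vs * indicator (paths (Suc j)) vs = G v (u # us)"
      using True vs d by (simp add: G_def wt_cons edge_prob_q)
    also have "\<dots> = G v (u # us) * indicator {v # u # us} vs" using vs by simp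
    also have "\<dots> \<le> (\<integral>\<^sup>+ v'. G v' (u # us) * indicator {v' # u # us} vs \<partial>count_space UNIV)"
      by (rule le_count[where f="\<lambda>v'. G v' (u # us) * indicator {v' # u # us} vs"])
    also have "\<dots> \<le> (\<integral>\<^sup>+ us'. \<integral>\<^sup>+ v'. G v' us' * indicator {v' # us'} vs \<partial>count_space UNIV \<partial>count_space UNIV)"
      by (rule le_count[where f="\<lambda>us'. \<integral>\<^sup>+ v'. G v' us' * indicator {v' # us'} vs \<partial>count_space UNIV"])
    finally show ?thesis .
  qed
  have "Jn lam TYPE('d) (Suc j) \<le> (\<integral>\<^sup>+ vs. \<integral>\<^sup>+ us. \<integral>\<^sup>+ v. G v us * indicator {v # us} vs \<partial>count_space UNIV \<partial>count_space UNIV \<partial>count_space UNIV)"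
    unfolding Jn_def by (rule nn_integral_mono) (rule pw)
  also have "\<dots> = (\<integral>\<^sup>+ us. \<integral>\<^sup>+ vs. \<integral>\<^sup>+ v. G v us * indicator {v # us} vs \<partial>count_space UNIV \<partial>count_space UNIV \<partial>count_space UNIV)"
    by (rule nn_integral_count_space_nn_integral) auto
  also have "\<dots> = (\<integral>\<^sup>+ us. \<integral>\<^sup>+ v. \<integral>\<^sup>+ vs. G v us * indicator {v # us} vs \<partial>count_space UNIV \<partial>count_space UNIV \<partial>count_space UNIV)"
    by (intro nn_integral_cong nn_integral_count_space_nn_integral) auto
  also have "\<dots> = (\<integral>\<^sup>+ us. \<integral>\<^sup>+ v. G v us \<partial>count_space UNIV \<partial>count_space UNIV)"
    by (intro nn_integral_cong) (simp add: emeasure_count_space)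
  also have "\<dots> = (\<integral>\<^sup>+ us. Mq lam TYPE('d) * (wt lam us * indicator (paths j :: ('d \<Rightarrow> int) list set) us) \<partial>count_space UNIV)"
  proof (intro nn_integral_cong)
    fix us :: "('d \<Rightarrow> int) list"
    have "(\<integral>\<^sup>+ v. G v us \<partial>count_space UNIV) = (\<integral>\<^sup>+ v. qf lam (\<lambda>i. v i - hd us i) \<partial>count_space UNIV) * (wt lam us * indicator (paths j) us)"
      unfolding G_def by (rule nn_integral_multc) simp
    then show "(\<integral>\<^sup>+ v. G v us \<partial>count_space UNIV) = Mq lam TYPE('d) * (wt lam us * indicator (paths j) us)"
      by (simp add: Mq_trans mult.commute)
  qed
  also have "\<dots> = Mq lam TYPE('d) * Jn lam TYPE('d) j"
    unfolding Jn_def by (rule nn_integral_cmult) simp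
  finally show ?thesis .
qed

lemma Jn_bound: "Jn lam TYPE('d::finite) j \<le> Mq lam TYPE('d) ^ j"
proof (induction j)
  case 0 then show ?case by (simp add: Jn0)
next
  case (Suc j)
  have "Jn lam TYPE('d) (Suc j) \<le> Mq lam TYPE('d) * Jn lam TYPE('d) j" by (rule Jn_Suc)
  also have "\<dots> \<le> Mq lam TYPE('d) * Mq lam TYPE('d) ^ j" by (intro mult_left_mono Suc.IH) simp
  finally show ?case by simp
qed

lemma PK_bound:
  fixes lam :: "real \<Rightarrow> real" and k :: nat
  assumes H: "\<forall>r>0. 0 \<le> lam r"
  shows "(\<integral>\<^sup>+ vs. emeasure (lrp lam) (Ev lam vs) \<partial>count_space (PK k :: ('d::finite \<Rightarrow> int) list set))
      \<le> (\<Sum>j\<le>k. Mq lam TYPE('d) ^ j)"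
proof -
  have "(\<integral>\<^sup>+ vs. emeasure (lrp lam) (Ev lam vs) \<partial>count_space (PK k :: ('d \<Rightarrow> int) list set))
      = (\<integral>\<^sup>+ vs. emeasure (lrp lam) (Ev lam vs) * indicator (PK k :: ('d \<Rightarrow> int) list set) vs \<partial>count_space UNIV)"
    by (rule nn_integral_count_space_indicator) simp
  also have "\<dots> = (\<integral>\<^sup>+ vs. wt lam vs * indicator (PK k :: ('d \<Rightarrow> int) list set) vs \<partial>count_space UNIV)"
  proof (intro nn_integral_cong)
    fix vs :: "('d \<Rightarrow> int) list"
    show "emeasure (lrp lam) (Ev lam vs) * indicator (PK k) vs = wt lam vs * indicator (PK k) vs"
    proof (cases "vs \<in> PK k")
      case True
      then have "distinct vs" by (simp add: PK_def)
      then have "emeasure (lrp lam) (Ev lam vs) = wt lam vs"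
        unfolding wt_def by (rule Ev_prob) (rule edge_prob_bounds[OF H])
      then show ?thesis by simp
    qed simp
  qed
  also have "\<dots> \<le> (\<integral>\<^sup>+ vs. (\<Sum>j\<le>k. wt lam vs * indicator (paths j :: ('d \<Rightarrow> int) list set) vs) \<partial>count_space UNIV)"
  proof (intro nn_integral_mono)
    fix vs :: "('d \<Rightarrow> int) list"
    show "wt lam vs * indicator (PK k) vs \<le> (\<Sum>j\<le>k. wt lam vs * indicator (paths j) vs)"
    proof (cases "vs \<in> PK k")
      case True
      then have "vs \<in> paths (length vs - 1)" "length vs - 1 \<in> {..k}" by (auto simp: PK_def paths_def)
      then have "wt lam vs * indicator (paths (length vs - 1)) vs \<le> (\<Sum>j\<le>k. wt lam vs * indicator (paths j) vs)"
        by (intro member_le_sum) auto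
      then show ?thesis using True \<open>vs \<in> paths (length vs - 1)\<close> by simp
    qed simp
  qed
  also have "\<dots> = (\<Sum>j\<le>k. Jn lam TYPE('d) j)"
    unfolding Jn_def by (rule nn_integral_sum) simp
  also have "\<dots> \<le> (\<Sum>j\<le>k. Mq lam TYPE('d) ^ j)"
    by (intro sum_mono Jn_bound)
  finally show ?thesis .
qed



lemma pow_diff_le:
  fixes a b :: real
  assumes "0 \<le> b" "b \<le> a"
  shows "a ^ Suc d - b ^ Suc d \<le> real (Suc d) * (a - b) * a ^ d"
proof (induction d)
  case 0 then show ?case by simp
next
  case (Suc d)
  have eq: "a ^ Suc (Suc d) - b ^ Suc (Suc d) = a * (a ^ Suc d - b ^ Suc d) + (a - b) * b ^ Suc d"
    by (simp add: algebra_simps)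
  have "a * (a ^ Suc d - b ^ Suc d) \<le> a * (real (Suc d) * (a - b) * a ^ d)"
    using Suc.IH assms by (intro mult_left_mono) auto
  moreover have "(a - b) * b ^ Suc d \<le> (a - b) * a ^ Suc d"
    using assms by (intro mult_left_mono power_mono) auto
  ultimately have "a ^ Suc (Suc d) - b ^ Suc (Suc d) \<le> a * (real (Suc d) * (a - b) * a ^ d) + (a - b) * a ^ Suc d"
    unfolding eq by linarith
  also have "\<dots> = real (Suc (Suc d)) * (a - b) * a ^ Suc d" by (simp add: algebra_simps)
  finally show ?case .
qed

definition lbox :: "int \<Rightarrow> ('d::finite \<Rightarrow> int) set" where
  "lbox n = {z. supnorm z \<le> n}"

lemma supnorm_le_iff: "supnorm z \<le> n \<longleftrightarrow> (\<forall>i. \<bar>z i\<bar> \<le> n)"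
  unfolding supnorm_def by (subst Max_le_iff) auto

lemma box_PiE: "lbox n = (\<Pi>\<^sub>E i\<in>(UNIV::'d::finite set). {-n..n})"
  unfolding lbox_def supnorm_le_iff by (auto simp: PiE_iff abs_le_iff) (use minus_le_iff in blast)+

lemma card_box: "0 \<le> n \<Longrightarrow> card (lbox n :: ('d::finite \<Rightarrow> int) set) = nat (2 * n + 1) ^ CARD('d)"
  unfolding box_PiE by (simp add: card_PiE)

lemma finite_box: "finite (lbox n :: ('d::finite \<Rightarrow> int) set)"
  unfolding box_PiE by (rule finite_PiE) auto

definition shell :: "nat \<Rightarrow> ('d::finite \<Rightarrow> int) set" where
  "shell n = {z. supnorm z = int n}"

lemma finite_shell: "finite (shell n :: ('d::finite \<Rightarrow> int) set)"
  by (rule finite_subset[OF _ finite_box[of "int n"]]) (auto simp: shell_def lbox_def)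

lemma card_shell:
  assumes "1 \<le> n"
  shows "real (card (shell n :: ('d::finite \<Rightarrow> int) set)) \<le> 2 * real CARD('d) * (2 * real n + 1) ^ (CARD('d) - 1)"
proof -
  let ?d = "CARD('d)"
  have sub: "shell n \<subseteq> lbox (int n) - (lbox (int n - 1) :: ('d \<Rightarrow> int) set)"
    by (auto simp: shell_def lbox_def)
  have sub2: "lbox (int n - 1) \<subseteq> (lbox (int n) :: ('d \<Rightarrow> int) set)" by (auto simp: lbox_def)
  have "card (shell n :: ('d \<Rightarrow> int) set) \<le> card (lbox (int n) - (lbox (int n - 1) :: ('d \<Rightarrow> int) set))"
    by (rule card_mono[OF _ sub]) (simp add: finite_box)
  also have "\<dots> = card (lbox (int n) :: ('d \<Rightarrow> int) set) - card (lbox (int n - 1) :: ('d \<Rightarrow> int) set)"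
    by (rule card_Diff_subset[OF finite_box sub2])
  also have "card (lbox (int n) :: ('d \<Rightarrow> int) set) = (2 * n + 1) ^ ?d"
  proof -
    have e: "2 * int n + 1 = int (2 * n + 1)" by simp
    have "nat (2 * int n + 1) = 2 * n + 1" by (simp only: e nat_int)
    then show ?thesis using card_box[of "int n", where 'd='d] by simp
  qed
  also have "card (lbox (int n - 1) :: ('d \<Rightarrow> int) set) = (2 * n - 1) ^ ?d"
  proof -
    have e: "2 * (int n - 1) + 1 = int (2 * n - 1)" using assms by (simp add: of_nat_diff)
    have "nat (2 * (int n - 1) + 1) = 2 * n - 1" by (simp only: e nat_int)
    then show ?thesis using card_box[of "int n - 1", where 'd='d] assms by simp
  qed
  finally have c: "card (shell n :: ('d \<Rightarrow> int) set) \<le> (2 * n + 1) ^ ?d - (2 * n - 1) ^ ?d" .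
  have le: "(2 * n - 1) ^ ?d \<le> (2 * n + 1) ^ ?d" by (intro power_mono) auto
  have "real (card (shell n :: ('d \<Rightarrow> int) set)) \<le> real ((2 * n + 1) ^ ?d - (2 * n - 1) ^ ?d)"
    using c by linarith
  also have "\<dots> = (2 * real n + 1) ^ ?d - (2 * real n - 1) ^ ?d"
    using le assms by (simp add: of_nat_diff add.commute)
  also have "\<dots> \<le> real ?d * ((2 * real n + 1) - (2 * real n - 1)) * (2 * real n + 1) ^ (?d - 1)"
    using pow_diff_le[of "2 * real n - 1" "2 * real n + 1" "?d - 1"] assms by simp
  also have "\<dots> = 2 * real ?d * (2 * real n + 1) ^ (?d - 1)" by simp
  finally show ?thesis .
qed



locale hyp =
  fixes lam L :: "real \<Rightarrow> real" and dd :: nat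
  assumes L_pos: "\<forall>r>0. L r > 0"
    and L_int: "(\<integral>\<^sup>+ r. ennreal (L r / r) * indicator {1..} r \<partial>lborel) < \<infinity>"
    and lam_def: "\<forall>r>0. lam r = r powr (- real dd) * L r"
    and lam_noninc: "\<forall>r s. 0 < r \<longrightarrow> r \<le> s \<longrightarrow> lam s \<le> lam r"
    and dd_pos: "1 \<le> dd"
begin

lemma lam_nonneg: "0 < r \<Longrightarrow> 0 \<le> lam r"
  using lam_def L_pos by (simp add: less_imp_le)

lemma L_over_r:
  assumes "0 < r"
  shows "L r / r = lam r * r ^ (dd - 1)"
proof -
  have "r ^ (dd - 1) = r powr (real dd - 1)"
    using assms dd_pos powr_realpow[of r "dd - 1"] by (simp add: of_nat_diff)
  then have "lam r * r ^ (dd - 1) = L r * (r powr (- real dd) * r powr (real dd - 1))"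
    using lam_def assms by simp
  also have "r powr (- real dd) * r powr (real dd - 1) = r powr (-1)"
    by (simp add: powr_add[symmetric])
  also have "\<dots> = 1 / r" using assms by (simp add: powr_minus divide_inverse)
  finally show ?thesis by simp
qed

definition bb :: "nat \<Rightarrow> real" where
  "bb m = lam (real m + 2) * (real m + 1) ^ (dd - 1)"

lemma bb_nonneg: "0 \<le> bb m"
  unfolding bb_def using lam_nonneg[of "real m + 2"] by simp

lemma bb_le:
  assumes "real m + 1 \<le> r" "r < real m + 2"
  shows "bb m \<le> L r / r"
proof -
  have r: "0 < r" using assms by linarith
  have "lam (real m + 2) \<le> lam r" using lam_noninc r assms by simp
  moreover have "(real m + 1) ^ (dd - 1) \<le> r ^ (dd - 1)" using assms by (intro power_mono) auto
  ultimately have "bb m \<le> lam r * r ^ (dd - 1)" unfolding bb_def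
    using lam_nonneg[OF r] by (intro mult_mono) auto
  then show ?thesis using L_over_r[OF r] by simp
qed

lemma summable_bb: "summable bb"
proof -
  define g where "g r = (\<Sum>m. ennreal (bb m) * indicator {real m + 1..<real m + 2} r)" for r :: real
  have ig: "(\<integral>\<^sup>+ r. g r \<partial>lborel) = (\<Sum>m. ennreal (bb m))"
  proof -
    have "(\<integral>\<^sup>+ r. g r \<partial>lborel) = (\<Sum>m. \<integral>\<^sup>+ r. ennreal (bb m) * indicator {real m + 1..<real m + 2} r \<partial>lborel)"
      unfolding g_def by (rule nn_integral_suminf) simp
    also have "\<dots> = (\<Sum>m. ennreal (bb m))"
      by (subst nn_integral_cmult_indicator) simp_all
    finally show ?thesis .
  qed
  have pw: "g r \<le> ennreal (L r / r) * indicator {1..} r" for r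
  proof (cases "1 \<le> r")
    case False
    then have "g r = (\<Sum>m. 0)"
      unfolding g_def by (intro suminf_cong) (simp add: indicator_def)
    then show ?thesis by simp
  next
    case True
    define m0 where "m0 = nat \<lfloor>r\<rfloor> - 1"
    have fl: "1 \<le> \<lfloor>r\<rfloor>" using True by linarith
    have iff: "r \<in> {real m + 1..<real m + 2} \<longleftrightarrow> m = m0" for m
    proof -
      have "r \<in> {real m + 1..<real m + 2} \<longleftrightarrow> \<lfloor>r\<rfloor> = int m + 1"
        by (simp add: floor_eq_iff) linarith
      also have "\<dots> \<longleftrightarrow> m = m0" unfolding m0_def using fl by linarith
      finally show ?thesis .
    qed
    have "g r = (\<Sum>m. if m = m0 then ennreal (bb m) else 0)"
      unfolding g_def indicator_def iff by (intro suminf_cong) simp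
    also have "\<dots> = ennreal (bb m0)" using sums_single[of m0 "\<lambda>m. ennreal (bb m)"] by (rule sums_unique[symmetric])
    also have "\<dots> \<le> ennreal (L r / r)"
      using iff[of m0] by (intro ennreal_leI bb_le) auto
    finally show ?thesis using True by simp
  qed
  have "(\<Sum>m. ennreal (bb m)) \<le> (\<integral>\<^sup>+ r. ennreal (L r / r) * indicator {1..} r \<partial>lborel)"
    unfolding ig[symmetric] by (intro nn_integral_mono pw)
  then have "(\<Sum>m. ennreal (bb m)) \<noteq> top" using L_int by (auto simp: top_unique)
  then show ?thesis by (rule summable_suminf_not_top[OF bb_nonneg])
qed

end



lemma Mq_fin:
  assumes "hyp lam L CARD('d::finite)"
  shows "Mq lam TYPE('d) < \<infinity>"
proof -
  interpret hyp lam L "CARD('d)" by fact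
  let ?d = "CARD('d)"
  define c where "c n = (if n = 0 then 0 else lam (real n))" for n :: nat
  define t where "t n = c n * real (card (shell n :: ('d \<Rightarrow> int) set))" for n
  have c_nn: "0 \<le> c n" for n unfolding c_def using lam_nonneg[of "real n"] by simp
  have t_nn: "0 \<le> t n" for n unfolding t_def using c_nn[of n] by simp
  have sum_t: "summable t"
  proof -
    have "summable (\<lambda>m. t (m + 2))"
    proof (rule summable_comparison_test'[where N=0])
      show "summable (\<lambda>m. (2 * real ?d * 5 ^ (?d - 1)) * bb m)" using summable_bb by (rule summable_mult)
    next
      fix m :: nat
      have l: "0 \<le> lam (real m + 2)" using lam_nonneg[of "real m + 2"] by simp
      have "norm (t (m + 2)) = lam (real m + 2) * real (card (shell (m + 2) :: ('d \<Rightarrow> int) set))"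
        using t_nn[of "m+2"] by (simp add: t_def c_def add.commute)
      also have "\<dots> \<le> lam (real m + 2) * (2 * real ?d * (2 * real (m + 2) + 1) ^ (?d - 1))"
        using l by (intro mult_left_mono card_shell) auto
      also have "\<dots> \<le> lam (real m + 2) * (2 * real ?d * (5 * (real m + 1)) ^ (?d - 1))"
        using l by (intro mult_left_mono power_mono) auto
      also have "\<dots> = (2 * real ?d * 5 ^ (?d - 1)) * bb m"
        unfolding bb_def by (simp only: power_mult_distrib mult_ac)
      finally show "norm (t (m + 2)) \<le> (2 * real ?d * 5 ^ (?d - 1)) * bb m" .
    qed
    then show ?thesis by (simp only: summable_iff_shift)
  qed
  have pw: "qf lam z \<le> (\<Sum>n. ennreal (c n) * indicator (shell n) z)" for z :: "'d \<Rightarrow> int"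
  proof -
    define N where "N = nat (supnorm z)"
    have iffN: "z \<in> shell n \<longleftrightarrow> n = N" for n
      unfolding shell_def N_def using supnorm_nonneg[of z] by auto
    have "(\<Sum>n. ennreal (c n) * indicator (shell n) z) = (\<Sum>n. if n = N then ennreal (c n) else 0)"
      unfolding indicator_def iffN by (intro suminf_cong) simp
    also have "\<dots> = ennreal (c N)" using sums_single[of N "\<lambda>n. ennreal (c n)"] by (rule sums_unique[symmetric])
    finally have eq: "(\<Sum>n. ennreal (c n) * indicator (shell n) z) = ennreal (c N)" .
    have "qf lam z \<le> ennreal (c N)"
    proof (cases "z = (\<lambda>_. 0)")
      case True then show ?thesis by (simp add: qf_def)
    next
      case False
      then have p: "0 < supnorm z" by (rule supnorm_pos)
      then have N: "N \<noteq> 0" "real_of_int (supnorm z) = real N" unfolding N_def by auto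
      have "1 - exp (- lam (real N)) \<le> lam (real N)" using exp_ge_add_one_self[of "- lam (real N)"] by linarith
      then show ?thesis using False N by (simp add: qf_def c_def ennreal_leI)
    qed
    then show ?thesis using eq by simp
  qed
  have "Mq lam TYPE('d) \<le> (\<integral>\<^sup>+ z. (\<Sum>n. ennreal (c n) * indicator (shell n) z) \<partial>count_space (UNIV :: ('d \<Rightarrow> int) set))"
    unfolding Mq_def by (intro nn_integral_mono pw)
  also have "\<dots> = (\<Sum>n. \<integral>\<^sup>+ z. ennreal (c n) * indicator (shell n) z \<partial>count_space (UNIV :: ('d \<Rightarrow> int) set))"
    by (rule nn_integral_suminf) simp
  also have "\<dots> = (\<Sum>n. ennreal (t n))"
  proof (intro suminf_cong)
    fix n
    have "(\<integral>\<^sup>+ z. ennreal (c n) * indicator (shell n) z \<partial>count_space (UNIV :: ('d \<Rightarrow> int) set))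
        = ennreal (c n) * emeasure (count_space UNIV) (shell n :: ('d \<Rightarrow> int) set)"
      by (rule nn_integral_cmult_indicator) simp
    also have "\<dots> = ennreal (c n) * of_nat (card (shell n :: ('d \<Rightarrow> int) set))"
      using finite_shell[of n, where 'd='d] by simp
    also have "\<dots> = ennreal (t n)"
      unfolding t_def using c_nn[of n] by (simp add: ennreal_mult ennreal_of_nat_eq_real_of_nat)
    finally show "(\<integral>\<^sup>+ z. ennreal (c n) * indicator (shell n) z \<partial>count_space (UNIV :: ('d \<Rightarrow> int) set)) = ennreal (t n)" .
  qed
  also have "\<dots> = ennreal (suminf t)" by (rule suminf_ennreal2[OF t_nn sum_t])
  finally have le: "Mq lam TYPE('d) \<le> ennreal (suminf t)" .
  show ?thesis by (rule le_less_trans[OF le]) simp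
qed



lemma geo_le:
  fixes m :: real
  assumes "0 \<le> m"
  shows "(\<Sum>j\<le>k. m ^ j) \<le> (1 + m) ^ k"
proof (induction k)
  case 0 then show ?case by simp
next
  case (Suc k)
  have "m ^ Suc k = m * m ^ k" by simp
  also have "\<dots> \<le> m * (1 + m) ^ k" using assms by (intro mult_left_mono power_mono) auto
  finally have "(\<Sum>j\<le>Suc k. m ^ j) \<le> (1 + m) ^ k + m * (1 + m) ^ k" using Suc.IH by simp
  also have "\<dots> = (1 + m) ^ Suc k" by (simp add: algebra_simps)
  finally show ?case .
qed

lemma powr_lt_iff:
  fixes x a :: real
  assumes "0 \<le> x" "0 < a" "1 \<le> k"
  shows "x powr (1 / real k) < a \<longleftrightarrow> x < a ^ k"
proof (cases "x = 0")
  case True then show ?thesis using assms by simp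
next
  case False
  then have x: "0 < x" using assms by simp
  define y where "y = x powr (1 / real k)"
  have y: "0 < y" unfolding y_def using x by simp
  have "y ^ k = y powr real k" using y by (simp add: powr_realpow)
  also have "\<dots> = x powr (1 / real k * real k)" unfolding y_def by (rule powr_powr)
  also have "1 / real k * real k = 1" using assms(3) by simp
  also have "x powr 1 = x" using x by simp
  finally have yk: "y ^ k = x" .
  show ?thesis
  proof
    assume "x powr (1 / real k) < a"
    then have "y < a" unfolding y_def .
    moreover have "0 \<le> y" using y by simp
    moreover have "0 < k" using assms(3) by simp
    ultimately have "y ^ k < a ^ k" by (rule power_strict_mono)
    then show "x < a ^ k" using yk by simp
  next
    assume "x < a ^ k"
    then have "y ^ k < a ^ k" using yk by simp
    moreover have "0 \<le> a" using assms(2) by simp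
    ultimately have "y < a" by (rule power_less_imp_less_base)
    then show "x powr (1 / real k) < a" unfolding y_def .
  qed
qed

lemma root_le:
  fixes A :: real
  assumes "0 < A" "1 \<le> k" "0 \<le> x" "x \<le> A ^ k"
  shows "x powr (1 / real k) \<le> A"
proof -
  have "x powr (1 / real k) \<le> (A ^ k) powr (1 / real k)" using assms by (intro powr_mono2) auto
  also have "(A ^ k) powr (1 / real k) = A"
  proof -
    have e: "A ^ k = A powr real k" using powr_realpow[of A k] assms(1) by simp
    have "(A powr real k) powr (1 / real k) = A powr (real k * (1 / real k))" by (rule powr_powr)
    also have "real k * (1 / real k) = 1" using assms(2) by simp
    finally show ?thesis unfolding e using assms(1) by simp
  qed
  finally show ?thesis .
qed

theorem lemma3p3:
  fixes lam L :: "real \<Rightarrow> real"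
  assumes L_pos: "\<forall>r>0. L r > 0"
    and L_sv: "slowly_varying L"
    and L_int: "(\<integral>\<^sup>+ r. ennreal (L r / r) * indicator {1..} r \<partial>lborel) < \<infinity>"
    and lam_def: "\<forall>r>0. lam r = r powr (- real CARD('d::finite)) * L r"
    and lam_noninc: "\<forall>r s. 0 < r \<longrightarrow> r \<le> s \<longrightarrow> lam s \<le> lam r"
    and percolating: "measure (lrp lam) {\<omega> \<in> space (lrp lam). infinite (cluster (\<omega> :: ('d \<Rightarrow> int) set \<Rightarrow> bool))} > 0"
  shows "\<exists>a2::real. a2 > 0 \<and>
           limsup (\<lambda>k. eroot k (\<integral>\<^sup>+ \<omega>. ball_size k (\<omega> :: ('d \<Rightarrow> int) set \<Rightarrow> bool) \<partial>lrp lam)) < ereal a2 \<and>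
           ((\<lambda>k. measure (lrp lam) {\<omega> \<in> space (lrp lam).
                 finite (ball k (\<omega> :: ('d \<Rightarrow> int) set \<Rightarrow> bool)) \<and> real (card (ball k \<omega>)) powr (1 / real k) < a2})
             \<longlonglongrightarrow> 1)"
proof -
  have d1: "1 \<le> CARD('d)" using finite_UNIV_card_ge_0[of, where 'a='d] by simp
  have hy: "hyp lam L CARD('d)"
    by (rule hyp.intro[OF L_pos L_int lam_def lam_noninc d1])
  interpret hyp lam L "CARD('d)" by (rule hy)
  interpret P: prob_space "lrp lam :: (('d \<Rightarrow> int) set \<Rightarrow> bool) measure" by (rule prob_lrp)
  have H: "\<forall>r>0. 0 \<le> lam r" using lam_nonneg by blast
  have Mfin: "Mq lam TYPE('d) < \<infinity>" by (rule Mq_fin[OF hy])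
  define m where "m = enn2real (Mq lam TYPE('d))"
  have m0: "0 \<le> m" unfolding m_def by simp
  have Mm: "Mq lam TYPE('d) = ennreal m" unfolding m_def using Mfin by simp
  define A where "A = 1 + m"
  define a2 where "a2 = A + 1"
  have A0: "0 < A" "0 < a2" "A < a2" using m0 unfolding A_def a2_def by auto
  define E where "E k = (\<integral>\<^sup>+ \<omega>. ball_size k (\<omega> :: ('d \<Rightarrow> int) set \<Rightarrow> bool) \<partial>lrp lam)" for k
  have Ebound: "E k \<le> ennreal (A ^ k)" for k
  proof -
    have "E k \<le> (\<integral>\<^sup>+ vs. emeasure (lrp lam) (Ev lam vs) \<partial>count_space (PK k :: ('d \<Rightarrow> int) list set))"
      unfolding E_def by (rule exp_bound)
    also have "\<dots> \<le> (\<Sum>j\<le>k. Mq lam TYPE('d) ^ j)" by (rule PK_bound[OF H])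
    also have "\<dots> = ennreal (\<Sum>j\<le>k. m ^ j)" unfolding Mm using m0 by (simp add: ennreal_power)
    also have "\<dots> \<le> ennreal (A ^ k)" unfolding A_def using geo_le[OF m0] by (rule ennreal_leI)
    finally show ?thesis .
  qed
  have meas[measurable]: "ball_size k \<in> borel_measurable (lrp lam :: (('d \<Rightarrow> int) set \<Rightarrow> bool) measure)" for k
    by (rule ball_size_meas)
  have ev: "eventually (\<lambda>k. eroot k (E k) \<le> ereal A) sequentially"
  proof (rule eventually_sequentiallyI[of 1])
    fix k :: nat assume k: "1 \<le> k"
    have fin: "E k \<noteq> \<infinity>" using Ebound[of k] by (auto simp: top_unique)
    have "enn2real (E k) \<le> A ^ k"
      using enn2real_mono[OF Ebound[of k]] A0 by simp
    then have "enn2real (E k) powr (1 / real k) \<le> A" using A0 k by (intro root_le) auto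
    then show "eroot k (E k) \<le> ereal A" using fin by (simp add: eroot_def)
  qed
  have lim1: "limsup (\<lambda>k. eroot k (E k)) < ereal a2"
  proof -
    have "limsup (\<lambda>k. eroot k (E k)) \<le> ereal A" by (rule Limsup_bounded[OF ev])
    also have "\<dots> < ereal a2" using A0 by simp
    finally show ?thesis .
  qed
  define C where "C k = {\<omega> \<in> space (lrp lam). ennreal (a2 ^ k) \<le> ball_size k (\<omega> :: ('d \<Rightarrow> int) set \<Rightarrow> bool)}" for k
  define B where "B k = {\<omega> \<in> space (lrp lam).
                 finite (ball k (\<omega> :: ('d \<Rightarrow> int) set \<Rightarrow> bool)) \<and> real (card (ball k \<omega>)) powr (1 / real k) < a2}" for k
  have Csets: "C k \<in> sets (lrp lam)" for k
  proof -
    have "C k = ball_size k -` {ennreal (a2 ^ k)..} \<inter> space (lrp lam)" unfolding C_def by auto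
    also have "\<dots> \<in> sets (lrp lam)" by (rule measurable_sets[OF meas]) (simp add: borel_closed closed_atLeast)
    finally show ?thesis .
  qed
  have BC: "B k = space (lrp lam) - C k" if k: "1 \<le> k" for k
  proof -
    have "(finite (ball k \<omega>) \<and> real (card (ball k \<omega>)) powr (1 / real k) < a2) \<longleftrightarrow> \<not> ennreal (a2 ^ k) \<le> ball_size k \<omega>"
      for \<omega> :: "('d \<Rightarrow> int) set \<Rightarrow> bool"
    proof (cases "finite (ball k \<omega>)")
      case True
      have "real (card (ball k \<omega>)) powr (1 / real k) < a2 \<longleftrightarrow> real (card (ball k \<omega>)) < a2 ^ k"
        using A0 k by (intro powr_lt_iff) auto
      also have "\<dots> \<longleftrightarrow> \<not> ennreal (a2 ^ k) \<le> ball_size k \<omega>"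
        using True A0 by (simp add: ball_size_def ennreal_of_nat_eq_real_of_nat not_le ennreal_less_iff)
      finally show ?thesis using True by simp
    qed (simp add: ball_size_def)
    then show ?thesis unfolding B_def C_def by blast
  qed
  have Cle: "measure (lrp lam) (C k) \<le> (A / a2) ^ k" for k
  proof -
    have "ennreal (a2 ^ k) * emeasure (lrp lam) (C k) = (\<integral>\<^sup>+ \<omega>. ennreal (a2 ^ k) * indicator (C k) \<omega> \<partial>lrp lam)"
      by (rule nn_integral_cmult_indicator[symmetric]) (rule Csets)
    also have "\<dots> \<le> E k" unfolding E_def
    proof (rule nn_integral_mono)
      fix \<omega> :: "('d \<Rightarrow> int) set \<Rightarrow> bool" assume w: "\<omega> \<in> space (lrp lam)"
      show "ennreal (a2 ^ k) * indicator (C k) \<omega> \<le> ball_size k \<omega>"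
      proof (cases "\<omega> \<in> C k")
        case True then show ?thesis by (simp add: C_def)
      next
        case False then show ?thesis by simp
      qed
    qed
    also have "\<dots> \<le> ennreal (A ^ k)" by (rule Ebound)
    finally have "ennreal (a2 ^ k * measure (lrp lam) (C k)) \<le> ennreal (A ^ k)"
      using A0 by (simp add: P.emeasure_eq_measure ennreal_mult)
    then have "a2 ^ k * measure (lrp lam) (C k) \<le> A ^ k" using A0 by simp
    then show ?thesis using A0 by (simp add: power_divide field_simps)
  qed
  have lim2: "(\<lambda>k. measure (lrp lam) (B k)) \<longlonglongrightarrow> 1"
  proof (rule tendsto_sandwich[where f="\<lambda>k. 1 - (A / a2) ^ k" and h="\<lambda>k. 1"])
    show "eventually (\<lambda>k. 1 - (A / a2) ^ k \<le> measure (lrp lam) (B k)) sequentially"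
    proof (rule eventually_sequentiallyI[of 1])
      fix k :: nat assume "1 \<le> k"
      then have "measure (lrp lam) (B k) = 1 - measure (lrp lam) (C k)"
        using BC P.prob_compl[OF Csets] by simp
      then show "1 - (A / a2) ^ k \<le> measure (lrp lam) (B k)" using Cle[of k] by simp
    qed
    show "eventually (\<lambda>k. measure (lrp lam) (B k) \<le> 1) sequentially"
      by (simp add: P.prob_le_1)
    have "(\<lambda>k. (A / a2) ^ k) \<longlonglongrightarrow> 0" using A0 by (intro LIMSEQ_power_zero) simp
    from tendsto_diff[OF tendsto_const[of 1] this]
    show "(\<lambda>k. 1 - (A / a2) ^ k) \<longlonglongrightarrow> 1" by simp
  qed simp
  show ?thesis
  proof (intro exI conjI)
    show "0 < a2" by (rule A0(2))
    show "limsup (\<lambda>k. eroot k (\<integral>\<^sup>+ \<omega>. ball_size k (\<omega> :: ('d \<Rightarrow> int) set \<Rightarrow> bool) \<partial>lrp lam)) < ereal a2"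
      using lim1 unfolding E_def .
    show "(\<lambda>k. measure (lrp lam) {\<omega> \<in> space (lrp lam).
                 finite (ball k (\<omega> :: ('d \<Rightarrow> int) set \<Rightarrow> bool)) \<and> real (card (ball k \<omega>)) powr (1 / real k) < a2})
             \<longlonglongrightarrow> 1"
      using lim2 unfolding B_def .
  qed
qed

end
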